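(* Let $n$ be a positive integer and let $\varphi(n)$ denote the minimum of all sums $r_1+s_1+s_2+\dots+s_t$, taken over all $t\in\mathbb N$ and all positive integers $r_1,\dots,r_t,s_1,\dots,s_t$ such that $n=\sum_{i=1}^t r_is_i$ and $r_1>r_2>\dots>r_t$ (the last condition being vacuous for $t=1$). Then: (i) there is a uniquely determined positive integer $k$ such that $k^2-k+1\le n\le k^2+k$; (ii) if $n\le k^2$ then $\varphi(n)=2k$; (iii) if $k^2+1\le n$ then $\varphi(n)=2k+1$.
   Context: $\mathbb N$ denotes the set of positive integers. No ordering condition is imposed on the $s_i$. *)

theory Defs
  imports Main
begin

definition admissible :: "nat \<Rightarrow> nat \<Rightarrow> (nat \<Rightarrow> nat) \<Rightarrow> (nat \<Rightarrow> nat) \<Rightarrow> bool" where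
  "admissible n t r s \<longleftrightarrow> t \<ge> 1 \<and> (\<forall>i\<in>{1..t}. r i > 0 \<and> s i > 0)
     \<and> n = (\<Sum>i=1..t. r i * s i)
     \<and> (\<forall>i. 1 \<le> i \<and> i < t \<longrightarrow> r i > r (Suc i))"

definition phi :: "nat \<Rightarrow> nat" where
  "phi n = Inf {r 1 + (\<Sum>i=1..t. s i) | t r s. admissible n t r s}"

end

theory Submission
  imports Defs
begin

lemma r_le_r1:
  assumes "admissible n t r s" "1 \<le> i" "i \<le> t"
  shows "r i \<le> r 1"
  using assms(2,3)
proof (induction i rule: dec_induct)
  case base then show ?case by simp
next
  case (step m)
  then have "r (Suc m) < r m" using assms(1) unfolding admissible_def by auto
  with step show ?case by simp
qed

lemma adm_bound:
  assumes "admissible n t r s"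
  shows "n \<le> r 1 * (\<Sum>i=1..t. s i)"
proof -
  have "n = (\<Sum>i=1..t. r i * s i)" using assms unfolding admissible_def by auto
  also have "\<dots> \<le> (\<Sum>i=1..t. r 1 * s i)"
    by (rule sum_mono) (use r_le_r1[OF assms] in auto)
  also have "\<dots> = r 1 * (\<Sum>i=1..t. s i)" by (simp add: sum_distrib_left)
  finally show ?thesis .
qed

lemma four_ab: "4 * (a::nat) * b \<le> (a + b)^2"
proof -
  have "(int a - int b)^2 \<ge> 0" by simp
  then have "4 * int a * int b \<le> (int a + int b)^2" by (simp add: power2_eq_square algebra_simps)
  then show ?thesis by (metis of_nat_add of_nat_le_iff of_nat_mult of_nat_numeral of_nat_power)
qed

lemma lower:
  assumes "admissible n t r s"
  shows "4 * n \<le> (r 1 + (\<Sum>i=1..t. s i))^2"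
proof -
  have "4 * n \<le> 4 * (r 1 * (\<Sum>i=1..t. s i))" using adm_bound[OF assms] by simp
  also have "\<dots> \<le> (r 1 + (\<Sum>i=1..t. s i))^2" using four_ab[of "r 1" "\<Sum>i=1..t. s i"] by (simp add: mult.assoc)
  finally show ?thesis .
qed

lemma construct:
  assumes "1 \<le> j" "j \<le> k" "a > 0 \<or> j = k"
  shows "k + a + 1 \<in> {r 1 + (\<Sum>i=1..t. s i) | t r s. admissible (k * a + j) t r s}"
proof (cases "j = k")
  case True
  have "admissible (k * a + j) 1 (\<lambda>_. k) (\<lambda>_. a + 1)"
    using assms True unfolding admissible_def by (auto simp: algebra_simps)
  then show ?thesis by force
next
  case False
  then have a: "a > 0" using assms by auto
  define r where "r = (\<lambda>i::nat. if i = 1 then k else j)"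
  define s where "s = (\<lambda>i::nat. if i = 1 then a else 1)"
  have e: "{1..2::nat} = {1,2}" by auto
  have "admissible (k * a + j) 2 r s"
    using assms False a unfolding admissible_def r_def s_def e
    by (auto simp: algebra_simps)
  moreover have "r 1 + (\<Sum>i=1..2. s i) = k + a + 1" unfolding r_def s_def e by simp
  ultimately show ?thesis by (metis (mono_tags, lifting) mem_Collect_eq)
qed

lemma inf_eq:
  fixes m :: nat
  assumes "m \<in> A" "\<forall>x\<in>A. m \<le> x"
  shows "Inf A = m"
  using assms by (metis cInf_eq_minimum)

lemma sq_expand: "(k::nat) > 0 \<Longrightarrow> k^2 - k + 1 = k * (k - 1) + 1"
  by (cases k) (auto simp: power2_eq_square)

theorem theorem8p1:
  fixes n :: nat
  assumes "n > 0"
  shows "(\<exists>!k::nat. k > 0 \<and> k^2 - k + 1 \<le> n \<and> n \<le> k^2 + k)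
       \<and> (\<forall>k::nat. k > 0 \<and> k^2 - k + 1 \<le> n \<and> n \<le> k^2 + k \<longrightarrow>
            (n \<le> k^2 \<longrightarrow> phi n = 2 * k) \<and> (k^2 + 1 \<le> n \<longrightarrow> phi n = 2 * k + 1))"
proof (intro conjI allI impI)
  let ?P = "\<lambda>k::nat. k > 0 \<and> k^2 - k + 1 \<le> n \<and> n \<le> k^2 + k"
  show "\<exists>!k. ?P k"
  proof
    define k where "k = (LEAST k. 0 < k \<and> n \<le> k^2 + k)"
    have ex: "0 < n \<and> n \<le> n^2 + n" using assms by simp
    have k1: "0 < k \<and> n \<le> k^2 + k" unfolding k_def by (rule LeastI[of _ n], fact ex)
    have "k^2 - k + 1 \<le> n"
    proof (cases "k = 1")
      case True then show ?thesis using assms by simp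
    next
      case False
      then have "\<not> (0 < k - 1 \<and> n \<le> (k-1)^2 + (k-1))"
        using k1 not_less_Least[of "k - 1" "\<lambda>k. 0 < k \<and> n \<le> k^2 + k"] unfolding k_def[symmetric]
        by auto
      moreover have "(k-1)^2 + (k-1) = k^2 - k" using k1
        by (cases k) (auto simp: power2_eq_square)
      ultimately show ?thesis using False k1 by auto
    qed
    with k1 show "?P k" by simp
    fix k' assume h: "?P k'"
    show "k' = k"
    proof (rule ccontr)
      assume "k' \<noteq> k"
      then consider "k' < k" | "k < k'" by linarith
      then show False
      proof cases
        case 1
        have "k'^2 + k' = k' * (k'+1)" by (simp add: power2_eq_square)
        also have "\<dots> \<le> (k - 1) * k" using 1 by (intro mult_mono) auto
        finally have "n < k^2 - k + 1" using h 1 by (simp add: power2_eq_square algebra_simps diff_mult_distrib)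
        then show False using \<open>k^2 - k + 1 \<le> n\<close> by simp
      next
        case 2
        have "k^2 + k = k * (k+1)" by (simp add: power2_eq_square)
        also have "\<dots> \<le> (k' - 1) * k'" using 2 by (intro mult_mono) auto
        finally have "n < k'^2 - k' + 1" using k1 2 by (simp add: power2_eq_square algebra_simps diff_mult_distrib)
        then show False using h by simp
      qed
    qed
  qed
next
  fix k :: nat
  assume h: "0 < k \<and> k^2 - k + 1 \<le> n \<and> n \<le> k^2 + k"
  have lo: "k * (k - 1) + 1 \<le> n" using h sq_expand[of k] by simp
  {
    assume hn: "n \<le> k^2"
    define j where "j = n - k * (k - 1)"
    have nj: "n = k * (k - 1) + j" using lo unfolding j_def by simp
    have j1: "1 \<le> j" "j \<le> k" using lo hn h unfolding j_def
      by (auto simp: power2_eq_square diff_mult_distrib2)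
    have "k - 1 > 0 \<or> j = k" using j1 by auto
    from construct[OF j1 this] have mem: "2 * k \<in> {r 1 + (\<Sum>i=1..t. s i) | t r s. admissible n t r s}"
      using h nj by (simp add: mult_2)
    show "phi n = 2 * k" unfolding phi_def
    proof (rule inf_eq[OF mem], safe)
      fix t r s assume a: "admissible n t r s"
      let ?m = "r 1 + (\<Sum>i=1..t. s i)"
      show "2 * k \<le> ?m"
      proof (rule ccontr)
        assume "\<not> 2 * k \<le> ?m"
        then have "?m \<le> 2 * k - 1" by simp
        then have "?m^2 \<le> (2*k - 1)^2" by (rule power_mono) simp
        also have "(2*k - 1)^2 = 4 * (k * (k - 1)) + 1" using h
          by (cases k) (auto simp: power2_eq_square algebra_simps)
        finally show False using lower[OF a] lo by linarith
      qed
    qed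
  }
  {
    assume hn: "k^2 + 1 \<le> n"
    define j where "j = n - k * k"
    have nj: "n = k * k + j" using hn unfolding j_def by (simp add: power2_eq_square)
    have j1: "1 \<le> j" "j \<le> k" using hn h unfolding j_def
      by (auto simp: power2_eq_square)
    have "k > 0 \<or> j = k" using h by auto
    from construct[OF j1 this] have mem: "2 * k + 1 \<in> {r 1 + (\<Sum>i=1..t. s i) | t r s. admissible n t r s}"
      using h nj by (simp add: mult_2)
    show "phi n = 2 * k + 1" unfolding phi_def
    proof (rule inf_eq[OF mem], safe)
      fix t r s assume a: "admissible n t r s"
      let ?m = "r 1 + (\<Sum>i=1..t. s i)"
      show "2 * k + 1 \<le> ?m"
      proof (rule ccontr)
        assume "\<not> 2 * k + 1 \<le> ?m"
        then have "?m \<le> 2 * k" by simp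
        then have "?m^2 \<le> (2*k)^2" by (rule power_mono) simp
        also have "(2*k)^2 = 4 * (k * k)" by (simp add: power2_eq_square)
        finally show False using lower[OF a] hn by (simp add: power2_eq_square)
      qed
    qed
  }
qed

end
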